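(* There is a constant $c>0$ such that for every $i\ge1$, the $i$-bit roof game $G_{i\text{-bit}}$ on $n=4i$ players has at most $c\,n^5$ ceiling coalitions (while it has $2^{i}=2^{n/4}$ roof coalitions).
   Context: Players are $N=\{1,\dots,n\}$, $n=4i$. A coalition $S'$ is a direct left-shift of $S$ if there is $m\in S$, $2\le m\le n$, $m-1\notin S$, with $S'=(S\setminus\{m\})\cup\{m-1\}$; a left-shift is obtained by one or more successive direct left-shifts; right-shifts are defined symmetrically (replacing $m-1$ by $m+1$ and $2\le m\le n$ by $1\le m\le n-1$). For $k\in\{0,\dots,2^i-1\}$ with $i$-bit binary representation $b_1\cdots b_i$, $S_{k,i}=\bigcup_{j=1}^iB_j$ with $B_j=\{4(j-1)+2,4(j-1)+3\}$ if $b_j=0$ and $B_j=\{4(j-1)+1,4(j-1)+4\}$ if $b_j=1$. $G_{i\text{-bit}}$ is the simple game on $N$ in which a coalition is winning iff it contains some $S_{k,i}$ or a left-shift of some $S_{k,i}$; it is a canonical linear game whose roof coalitions (minimal winning coalitions all of whose right-shifts are losing) are exactly the $2^i$ coalitions $S_{k,i}$. A ceiling coalition is a maximal losing coalition (losing $S$ with $S\cup\{m\}$ winning for all $m\notin S$) all of whose left-shifts are winning. *)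

theory Defs
  imports Complex_Main
begin

text \<open>Players are 1..n; coalitions are subsets of {1..n}.
  A simple game on n players is given by its winning predicate W on coalitions.\<close>

definition direct_left_shift :: "nat \<Rightarrow> nat set \<Rightarrow> nat set \<Rightarrow> bool" where
  "direct_left_shift n S S' \<longleftrightarrow>
     (\<exists>m\<in>S. 2 \<le> m \<and> m \<le> n \<and> m - 1 \<notin> S \<and> S' = insert (m - 1) (S - {m}))"

definition direct_right_shift :: "nat \<Rightarrow> nat set \<Rightarrow> nat set \<Rightarrow> bool" where
  "direct_right_shift n S S' \<longleftrightarrow>
     (\<exists>m\<in>S. 1 \<le> m \<and> m \<le> n - 1 \<and> m + 1 \<notin> S \<and> S' = insert (m + 1) (S - {m}))"

definition left_shift :: "nat \<Rightarrow> nat set \<Rightarrow> nat set \<Rightarrow> bool" where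
  "left_shift n = (direct_left_shift n)\<^sup>+\<^sup>+"

definition right_shift :: "nat \<Rightarrow> nat set \<Rightarrow> nat set \<Rightarrow> bool" where
  "right_shift n = (direct_right_shift n)\<^sup>+\<^sup>+"

definition players :: "nat \<Rightarrow> nat set" where
  "players n = {1..n}"

definition ceiling_coalition :: "nat \<Rightarrow> (nat set \<Rightarrow> bool) \<Rightarrow> nat set \<Rightarrow> bool" where
  "ceiling_coalition n W S \<longleftrightarrow>
     S \<subseteq> players n \<and> \<not> W S \<and>
     (\<forall>m \<in> players n - S. W (insert m S)) \<and>
     (\<forall>T. left_shift n S T \<longrightarrow> W T)"

definition roof_coalition :: "nat \<Rightarrow> (nat set \<Rightarrow> bool) \<Rightarrow> nat set \<Rightarrow> bool" where
  "roof_coalition n W S \<longleftrightarrow>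
     S \<subseteq> players n \<and> W S \<and> (\<forall>T. T \<subset> S \<longrightarrow> \<not> W T) \<and>
     (\<forall>T. right_shift n S T \<longrightarrow> \<not> W T)"

text \<open>Bit j (1-based, b_1 most significant) of the i-bit binary representation of k.\<close>
definition bit_of :: "nat \<Rightarrow> nat \<Rightarrow> nat \<Rightarrow> nat" where
  "bit_of i k j = (k div 2 ^ (i - j)) mod 2"

definition block :: "nat \<Rightarrow> nat \<Rightarrow> nat set" where
  "block j b = (if b = 0 then {4 * (j - 1) + 2, 4 * (j - 1) + 3}
                else {4 * (j - 1) + 1, 4 * (j - 1) + 4})"

definition S_ki :: "nat \<Rightarrow> nat \<Rightarrow> nat set" where
  "S_ki k i = (\<Union>j\<in>{1..i}. block j (bit_of i k j))"

definition G_ibit :: "nat \<Rightarrow> nat set \<Rightarrow> bool" where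
  "G_ibit i S \<longleftrightarrow> S \<subseteq> players (4 * i) \<and>
     (\<exists>k < 2 ^ i. \<exists>T. (T = S_ki k i \<or> left_shift (4 * i) (S_ki k i) T) \<and> T \<subseteq> S)"

end

theory Submission
  imports Defs "HOL-Library.FuncSet"
begin



definition cnt :: "nat set \<Rightarrow> nat \<Rightarrow> nat" where
  "cnt X x = card {y\<in>X. y \<le> x}"

lemma fin_cnt[simp]: "finite {y\<in>X. y \<le> (x::nat)}"
  by (rule finite_subset[of _ "{..x}"]) auto

lemma cnt_mono_set: "A \<subseteq> B \<Longrightarrow> cnt A x \<le> cnt B x"
  unfolding cnt_def by (rule card_mono) auto

lemma cnt_mono_x: "x \<le> y \<Longrightarrow> cnt A x \<le> cnt A y"
  unfolding cnt_def by (rule card_mono) auto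

lemma cnt_insert_below: "x < m \<Longrightarrow> cnt (insert m S) x = cnt S x"
  unfolding cnt_def by (rule arg_cong[where f=card]) auto

lemma cnt_dls:
  assumes "m \<in> S" "m - 1 \<notin> S" "1 \<le> m"
  shows "cnt (insert (m - 1) (S - {m})) x = (if x = m - 1 then cnt S x + 1 else cnt S x)"
proof (cases "x = m - 1")
  case True
  have "{y \<in> insert (m - 1) (S - {m}). y \<le> x} = insert (m-1) {y\<in>S. y \<le> x}"
    using True assms by auto
  moreover have "m - 1 \<notin> {y\<in>S. y \<le> x}" using assms by auto
  ultimately show ?thesis using True unfolding cnt_def by simp
next
  case False
  show ?thesis
  proof (cases "x < m - 1")
    case True
    have "{y \<in> insert (m - 1) (S - {m}). y \<le> x} = {y\<in>S. y \<le> x}"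
      using True assms by auto
    thus ?thesis using False unfolding cnt_def by simp
  next
    case c2: False
    then have "m \<le> x" using False by auto
    have "{y \<in> insert (m - 1) (S - {m}). y \<le> x} = insert (m-1) ({y\<in>S. y \<le> x} - {m})"
      using assms \<open>m \<le> x\<close> by auto
    moreover have "m - 1 \<notin> {y\<in>S. y \<le> x} - {m}" using assms by auto
    moreover have "m \<in> {y\<in>S. y \<le> x}" using assms \<open>m \<le> x\<close> by auto
    moreover then have "card {y\<in>S. y \<le> x} > 0" using card_gt_0_iff by fastforce
    ultimately show ?thesis using False unfolding cnt_def
      by (simp add: card_Suc_Diff1)
  qed
qed

lemma cnt_drs:
  assumes "m \<in> S" "m + 1 \<notin> S"
  shows "cnt (insert (m + 1) (S - {m})) x = (if x = m then cnt S x - 1 else cnt S x)"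
    and "cnt S m \<ge> 1"
proof -
  show "cnt S m \<ge> 1" unfolding cnt_def using assms
    by (metis (mono_tags, lifting) One_nat_def Suc_leI card_gt_0_iff empty_iff fin_cnt le_refl mem_Collect_eq)
  show "cnt (insert (m + 1) (S - {m})) x = (if x = m then cnt S x - 1 else cnt S x)"
  proof (cases "x = m")
    case True
    have "{y \<in> insert (m + 1) (S - {m}). y \<le> x} = {y\<in>S. y \<le> x} - {m}"
      using True assms by auto
    thus ?thesis using True assms unfolding cnt_def by simp
  next
    case False
    show ?thesis
    proof (cases "x < m")
      case True
      have "{y \<in> insert (m + 1) (S - {m}). y \<le> x} = {y\<in>S. y \<le> x}"
        using True assms by auto
      thus ?thesis using False unfolding cnt_def by simp
    next
      case c2: False
      then have "m + 1 \<le> x" using False by auto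
      have "{y \<in> insert (m + 1) (S - {m}). y \<le> x} = insert (m+1) ({y\<in>S. y \<le> x} - {m})"
        using assms \<open>m + 1 \<le> x\<close> by auto
      moreover have "m + 1 \<notin> {y\<in>S. y \<le> x} - {m}" using assms by auto
      moreover have "m \<in> {y\<in>S. y \<le> x}" using assms \<open>m + 1 \<le> x\<close> by auto
      moreover then have "card {y\<in>S. y \<le> x} > 0" using card_gt_0_iff by fastforce
      ultimately show ?thesis using False unfolding cnt_def
        by (simp add: card_Suc_Diff1)
    qed
  qed
qed

lemma dls_cnt: "direct_left_shift n A B \<Longrightarrow> cnt A x \<le> cnt B x"
  unfolding direct_left_shift_def using cnt_dls by fastforce

lemma left_shift_cnt: "left_shift n A B \<Longrightarrow> cnt A x \<le> cnt B x"
  unfolding left_shift_def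
proof (induction rule: tranclp.induct)
  case (r_into_trancl a b) thus ?case using dls_cnt by blast
next
  case (trancl_into_trancl a b c) thus ?case using dls_cnt le_trans by blast
qed

lemma drs_cnt: "direct_right_shift n A B \<Longrightarrow> cnt B x \<le> cnt A x"
  unfolding direct_right_shift_def using cnt_drs by fastforce

lemma right_shift_cnt: "(direct_right_shift n)\<^sup>*\<^sup>* A B \<Longrightarrow> cnt B x \<le> cnt A x"
proof (induction rule: rtranclp.induct)
  case (rtrancl_refl a) thus ?case by simp
next
  case (rtrancl_into_rtrancl a b c) thus ?case using drs_cnt le_trans by blast
qed

lemma dls_drs: "direct_left_shift n A B \<Longrightarrow> direct_right_shift n B A"
  unfolding direct_left_shift_def direct_right_shift_def
proof (elim bexE conjE)
  fix m assume h: "m \<in> A" "2 \<le> m" "m \<le> n" "m - 1 \<notin> A" "B = insert (m - 1) (A - {m})"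
  show "\<exists>m\<in>B. 1 \<le> m \<and> m \<le> n - 1 \<and> m + 1 \<notin> B \<and> A = insert (m + 1) (B - {m})"
    apply (rule bexI[of _ "m - 1"])
    using h by auto
qed

lemma left_right: "left_shift n A B \<Longrightarrow> right_shift n B A"
  unfolding left_shift_def right_shift_def
proof (induction rule: tranclp.induct)
  case (r_into_trancl a b) thus ?case using dls_drs by blast
next
  case (trancl_into_trancl a b c) thus ?case using dls_drs tranclp_into_tranclp2 by metis
qed




lemma suff_shift:
  assumes "finite A" "A \<subseteq> {1..n}" "S \<subseteq> {1..n}" "\<forall>x. cnt A x \<le> cnt S x"
  shows "\<exists>T\<subseteq>S. T = A \<or> left_shift n A T"
  using assms
proof (induction "\<Sum>A" arbitrary: A rule: less_induct)
  case less
  show ?case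
  proof (cases "A \<subseteq> S")
    case True thus ?thesis by blast
  next
    case False
    define p where "p = Min (A - S)"
    have fin: "finite (A - S)" using less.prems by auto
    have ne: "A - S \<noteq> {}" using False by auto
    have pAS: "p \<in> A - S" unfolding p_def using fin ne Min_in by blast
    have pmin: "y \<in> S" if "y \<in> A" "y < p" for y
    proof (rule ccontr)
      assume "y \<notin> S"
      hence "p \<le> y" unfolding p_def using Min_le[OF fin] that by blast
      thus False using that by simp
    qed
    have e1: "{y\<in>A. y \<le> p} = insert p {y\<in>A. y < p}" using pAS by auto
    have e2: "{y\<in>S. y \<le> p} = {y\<in>S. y < p}" using pAS by (auto simp: le_less)
    have fA: "finite {y\<in>A. y < p}" by (rule finite_subset[of _ "{..<p}"]) auto
    have fS: "finite {y\<in>S. y < p}" by (rule finite_subset[of _ "{..<p}"]) auto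
    have "cnt A p \<le> cnt S p" using less.prems by blast
    hence "Suc (card {y\<in>A. y < p}) \<le> card {y\<in>S. y < p}"
      unfolding cnt_def e1 e2 using fA by simp
    hence "\<not> {y\<in>S. y < p} \<subseteq> {y\<in>A. y < p}"
    proof (intro notI)
      assume "{y\<in>S. y < p} \<subseteq> {y\<in>A. y < p}"
      hence "card {y\<in>S. y < p} \<le> card {y\<in>A. y < p}" by (rule card_mono[OF fA])
      thus False using \<open>Suc (card {y\<in>A. y < p}) \<le> card {y\<in>S. y < p}\<close> by simp
    qed
    then obtain s where s: "s \<in> S" "s < p" "s \<notin> A" by blast
    define M where "M = {a\<in>A. s < a}"
    have fM: "finite M" unfolding M_def using less.prems by auto
    have neM: "M \<noteq> {}" unfolding M_def using pAS s by auto
    define m where "m = Min M"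
    have mM: "m \<in> A" "s < m" using Min_in[OF fM neM] unfolding m_def M_def by auto
    have mmin: "m \<le> a" if "a \<in> A" "s < a" for a
      using Min_le[OF fM, of a] that unfolding m_def M_def by simp
    have s1: "s \<ge> 1" using s less.prems by auto
    have m2: "m \<ge> 2" using mM s1 by auto
    have mn: "m \<le> n" using mM less.prems by auto
    have m1: "m - 1 \<notin> A"
    proof
      assume "m - 1 \<in> A"
      moreover have "m - 1 \<noteq> s" using s \<open>m - 1 \<in> A\<close> by auto
      hence "s < m - 1" using mM by auto
      ultimately show False using mmin[of "m-1"] m2 by auto
    qed
    have sub: "{y\<in>A. y \<le> m - 1} \<subseteq> {y\<in>S. y \<le> m - 1} - {s}"
    proof
      fix y assume y: "y \<in> {y\<in>A. y \<le> m - 1}"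
      hence "\<not> s < y" using mmin[of y] m2 by auto
      hence "y < s" using y s by (cases "y = s") auto
      thus "y \<in> {y\<in>S. y \<le> m - 1} - {s}" using y pmin s by auto
    qed
    have sin: "s \<in> {y\<in>S. y \<le> m - 1}" using s mM by auto
    have lt: "cnt A (m - 1) < cnt S (m - 1)"
    proof -
      have "cnt A (m - 1) \<le> card ({y\<in>S. y \<le> m - 1} - {s})"
        unfolding cnt_def by (rule card_mono) (use sub in auto)
      also have "\<dots> < cnt S (m - 1)" unfolding cnt_def
        by (rule card_Diff1_less[OF fin_cnt sin])
      finally show ?thesis .
    qed
    define A' where "A' = insert (m - 1) (A - {m})"
    have dls: "direct_left_shift n A A'"
      unfolding direct_left_shift_def A'_def apply (rule bexI[of _ m]) using mM m2 mn m1 by auto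
    have cA': "\<forall>x. cnt A' x \<le> cnt S x"
    proof
      fix x show "cnt A' x \<le> cnt S x" unfolding A'_def using cnt_dls[OF mM(1) m1, of x] m2 lt less.prems
        by (cases "x = m - 1") auto
    qed
    have finA': "finite A'" using less.prems unfolding A'_def by auto
    have subA': "A' \<subseteq> {1..n}" using less.prems m2 mn unfolding A'_def by auto
    have "\<Sum>A' + 1 = \<Sum>A"
    proof -
      have "\<Sum>A' = (m - 1) + \<Sum>(A - {m})" unfolding A'_def
        using less.prems m1 by (simp add: sum.insert)
      moreover have "\<Sum>A = m + \<Sum>(A - {m})"
        using less.prems mM by (simp add: sum.remove)
      ultimately show ?thesis using m2 by simp
    qed
    hence "\<Sum>A' < \<Sum>A" by simp
    from less.hyps[OF this finA' subA' less.prems(3) cA']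
    obtain T where "T \<subseteq> S" "T = A' \<or> left_shift n A' T" by blast
    moreover have "left_shift n A A'" unfolding left_shift_def using dls by blast
    ultimately show ?thesis unfolding left_shift_def
      using tranclp_into_tranclp2[of "direct_left_shift n" A A'] dls by auto
  qed
qed




lemma block_bounds: "j \<ge> 1 \<Longrightarrow> y \<in> block j b \<Longrightarrow> 4*j - 3 \<le> y \<and> y \<le> 4*j"
  unfolding block_def by (auto split: if_splits)

lemma card_block: "card (block j b) = 2"
  unfolding block_def by auto

lemma finite_block[simp]: "finite (block j b)"
  unfolding block_def by auto

lemma mem_Ski: "y \<in> S_ki k i \<longleftrightarrow> (\<exists>j\<in>{1..i}. y \<in> block j (bit_of i k j))"
  unfolding S_ki_def by auto

lemma Ski_sub: "S_ki k i \<subseteq> {1..4*i}"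
proof
  fix y assume "y \<in> S_ki k i"
  then obtain j where "j \<in> {1..i}" "y \<in> block j (bit_of i k j)" using mem_Ski by blast
  moreover have "4*j - 3 \<le> y \<and> y \<le> 4*j" using block_bounds[of j y] calculation by auto
  ultimately show "y \<in> {1..4*i}" by auto
qed

lemma finite_Ski[simp]: "finite (S_ki k i)"
  using Ski_sub finite_subset by blast

lemma cnt_Ski_decomp:
  assumes j: "j \<in> {1..i}" and x: "4*j - 3 \<le> x" "x \<le> 4*j"
  shows "cnt (S_ki k i) x = cnt (S_ki k i) (4*(j-1)) + cnt (block j (bit_of i k j)) x"
proof -
  have eq: "{y\<in>S_ki k i. y \<le> x} = {y\<in>S_ki k i. y \<le> 4*(j-1)} \<union> {y\<in>block j (bit_of i k j). y \<le> x}"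
  proof (rule set_eqI, rule iffI)
    fix y assume "y \<in> {y\<in>S_ki k i. y \<le> x}"
    then obtain j' where j': "j' \<in> {1..i}" "y \<in> block j' (bit_of i k j')" "y \<le> x"
      using mem_Ski by blast
    have b: "4*j' - 3 \<le> y" "y \<le> 4*j'" using block_bounds[of j' y] j' by auto
    consider "j' < j" | "j' = j" | "j' > j" by linarith
    thus "y \<in> {y\<in>S_ki k i. y \<le> 4*(j-1)} \<union> {y\<in>block j (bit_of i k j). y \<le> x}"
    proof cases
      case 1 thus ?thesis using b j' mem_Ski by auto
    next
      case 2 thus ?thesis using j' by auto
    next
      case 3 thus ?thesis using b j' x by auto
    qed
  next
    fix y assume "y \<in> {y\<in>S_ki k i. y \<le> 4*(j-1)} \<union> {y\<in>block j (bit_of i k j). y \<le> x}"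
    thus "y \<in> {y\<in>S_ki k i. y \<le> x}" using mem_Ski j x by auto
  qed
  have disj: "{y\<in>S_ki k i. y \<le> 4*(j-1)} \<inter> {y\<in>block j (bit_of i k j). y \<le> x} = {}"
  proof -
    { fix y assume y: "y \<in> block j (bit_of i k j)" "y \<le> 4*(j-1)"
      have "4*j - 3 \<le> y" using block_bounds[of j y] y j by auto
      hence False using y j by auto }
    thus ?thesis by blast
  qed
  show ?thesis unfolding cnt_def eq
    by (rule card_Un_disjoint[OF _ _ disj]) auto
qed

lemma cnt_block_top: "j \<ge> 1 \<Longrightarrow> cnt (block j b) (4*j) = 2"
proof -
  assume "j \<ge> 1"
  hence "{y\<in>block j b. y \<le> 4*j} = block j b" using block_bounds by blast
  thus ?thesis unfolding cnt_def using card_block by simp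
qed

lemma cnt_Ski_full: "j \<le> i \<Longrightarrow> cnt (S_ki k i) (4*j) = 2*j"
proof (induction j)
  case 0
  have "{y\<in>S_ki k i. y \<le> 4*0} = {}" using Ski_sub by fastforce
  thus ?case unfolding cnt_def by simp
next
  case (Suc j)
  have "cnt (S_ki k i) (4*Suc j) = cnt (S_ki k i) (4*j) + cnt (block (Suc j) (bit_of i k (Suc j))) (4*Suc j)"
    using cnt_Ski_decomp[of "Suc j" i "4*Suc j" k] Suc.prems by simp
  thus ?case using Suc cnt_block_top[of "Suc j"] by simp
qed

lemma cnt_Ski:
  assumes j: "j \<in> {1..i}" and x: "4*j - 3 \<le> x" "x \<le> 4*j"
  shows "cnt (S_ki k i) x = 2*(j-1) + cnt (block j (bit_of i k j)) x"
proof -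
  have "j - 1 \<le> i" using j by auto
  thus ?thesis using cnt_Ski_decomp[OF assms] cnt_Ski_full[of "j-1" i k] by simp
qed

lemma cnt_Ski_big: "4*i \<le> x \<Longrightarrow> cnt (S_ki k i) x = 2*i"
proof -
  assume "4*i \<le> x"
  hence "{y\<in>S_ki k i. y \<le> x} = {y\<in>S_ki k i. y \<le> 4*i}" using Ski_sub by fastforce
  thus ?thesis using cnt_Ski_full[of i i k] unfolding cnt_def by simp
qed

lemma card_Ski: "card (S_ki k i) = 2*i"
proof -
  have "{y\<in>S_ki k i. y \<le> 4*i} = S_ki k i" using Ski_sub by fastforce
  thus ?thesis using cnt_Ski_full[of i i k] unfolding cnt_def by simp
qed

definition Pb :: "nat \<Rightarrow> (nat \<Rightarrow> nat) \<Rightarrow> bool" where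
  "Pb j g \<longleftrightarrow> (\<exists>b\<in>{0,1}. \<forall>x\<in>{4*j-3..4*j}. 2*(j-1) + cnt (block j b) x \<le> g x)"

lemma Pb_cong: "(\<And>x. 4*j-3 \<le> x \<Longrightarrow> x \<le> 4*j \<Longrightarrow> g x = g' x) \<Longrightarrow> Pb j g = Pb j g'"
  unfolding Pb_def by auto

lemma bit_of_01: "bit_of i k j \<in> {0,1}"
  unfolding bit_of_def by auto

lemma W_nec:
  assumes "G_ibit i S"
  shows "S \<subseteq> players (4*i)" "\<exists>k<2^i. \<forall>x. cnt (S_ki k i) x \<le> cnt S x"
proof -
  show "S \<subseteq> players (4*i)" using assms unfolding G_ibit_def by blast
  from assms obtain k T where k: "k < 2^i" "T = S_ki k i \<or> left_shift (4*i) (S_ki k i) T" "T \<subseteq> S"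
    unfolding G_ibit_def by blast
  have "cnt (S_ki k i) x \<le> cnt S x" for x
  proof -
    have "cnt (S_ki k i) x \<le> cnt T x" using k(2) left_shift_cnt by auto
    also have "\<dots> \<le> cnt S x" using k(3) cnt_mono_set by blast
    finally show ?thesis .
  qed
  thus "\<exists>k<2^i. \<forall>x. cnt (S_ki k i) x \<le> cnt S x" using k by blast
qed

lemma W_nec_P:
  assumes "G_ibit i S" "j \<in> {1..i}"
  shows "Pb j (cnt S)"
proof -
  obtain k where k: "\<forall>x. cnt (S_ki k i) x \<le> cnt S x" using W_nec(2)[OF assms(1)] by blast
  show ?thesis unfolding Pb_def
  proof (rule bexI[of _ "bit_of i k j"])
    show "bit_of i k j \<in> {0,1}" by (rule bit_of_01)
    show "\<forall>x\<in>{4 * j - 3..4 * j}. 2 * (j - 1) + cnt (block j (bit_of i k j)) x \<le> cnt S x"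
    proof
      fix x assume "x \<in> {4 * j - 3..4 * j}"
      hence "cnt (S_ki k i) x = 2 * (j - 1) + cnt (block j (bit_of i k j)) x"
        using cnt_Ski[OF assms(2)] by auto
      thus "2 * (j - 1) + cnt (block j (bit_of i k j)) x \<le> cnt S x" using k by metis
    qed
  qed
qed




lemma bits_inj:
  assumes "k < 2^i" "k' < 2^i" "\<forall>j\<in>{1..i}. bit_of i k j = bit_of i k' j"
  shows "k = k'"
proof (rule bit_eqI)
  fix t
  show "bit k t \<longleftrightarrow> bit k' t"
  proof (cases "t < i")
    case True
    hence "i - t \<in> {1..i}" by auto
    hence "bit_of i k (i - t) = bit_of i k' (i - t)" using assms(3) by blast
    moreover have "i - (i - t) = t" using True by auto
    ultimately have "k div 2^t mod 2 = k' div 2^t mod 2" unfolding bit_of_def by simp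
    thus ?thesis by (simp add: bit_iff_odd odd_iff_mod_2_eq_one)
  next
    case False
    hence "(2::nat)^i \<le> 2^t" by simp
    hence "k < 2^t" "k' < 2^t" using assms by (meson less_le_trans)+
    hence "k div 2^t = 0" "k' div 2^t = 0" by simp_all
    thus ?thesis by (simp add: bit_iff_odd)
  qed
qed

lemma bits_surj:
  assumes "\<forall>j\<in>{1..i}. \<beta> j \<in> {0::nat,1}"
  shows "\<exists>k<2^i. \<forall>j\<in>{1..i}. bit_of i k j = \<beta> j"
proof -
  define f where "f k = restrict (bit_of i k) {1..i}" for k
  define P where "P = PiE {1..i} (\<lambda>_. {0::nat,1})"
  have sub: "f ` {..<2^i} \<subseteq> P" unfolding f_def P_def by (auto simp: bit_of_def)
  have inj: "inj_on f {..<2^i}"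
  proof (rule inj_onI)
    fix k k' assume h: "k \<in> {..<2^i}" "k' \<in> {..<2^i}" "f k = f k'"
    have "\<forall>j\<in>{1..i}. bit_of i k j = bit_of i k' j"
    proof
      fix j assume "j \<in> {1..i}"
      thus "bit_of i k j = bit_of i k' j" using h(3) unfolding f_def
        by (metis restrict_apply')
    qed
    thus "k = k'" using bits_inj h by auto
  qed
  have c1: "card (f ` {..<2^i}) = 2^i" using card_image[OF inj] by simp
  have c2: "card P = 2^i" unfolding P_def by (simp add: card_PiE numeral_2_eq_2)
  have fP: "finite P" unfolding P_def by (simp add: finite_PiE)
  have eq: "f ` {..<2^i} = P" using card_subset_eq[OF fP sub] c1 c2 by simp
  have "restrict \<beta> {1..i} \<in> P" unfolding P_def using assms by auto
  then obtain k where k: "k < 2^i" "f k = restrict \<beta> {1..i}" using eq by (metis imageE lessThan_iff)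
  have "\<forall>j\<in>{1..i}. bit_of i k j = \<beta> j"
  proof
    fix j assume "j \<in> {1..i}"
    thus "bit_of i k j = \<beta> j" using k(2) unfolding f_def by (metis restrict_apply')
  qed
  thus ?thesis using k by blast
qed

lemma W_suff:
  assumes S: "S \<subseteq> players (4*i)" and P: "\<forall>j\<in>{1..i}. Pb j (cnt S)"
  shows "G_ibit i S"
proof -
  have "\<forall>j\<in>{1..i}. \<exists>b. b \<in> {0,1} \<and> (\<forall>x\<in>{4*j-3..4*j}. 2*(j-1) + cnt (block j b) x \<le> cnt S x)"
    using P unfolding Pb_def by blast
  then obtain \<beta> where \<beta>: "\<forall>j\<in>{1..i}. \<beta> j \<in> {0,1} \<and> (\<forall>x\<in>{4*j-3..4*j}. 2*(j-1) + cnt (block j (\<beta> j)) x \<le> cnt S x)"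
    by metis
  obtain k where k: "k < 2^i" "\<forall>j\<in>{1..i}. bit_of i k j = \<beta> j"
    using bits_surj[of i \<beta>] \<beta> by blast
  have mid: "cnt (S_ki k i) x \<le> cnt S x" if x: "1 \<le> x" "x \<le> 4*i" for x
  proof -
    define j where "j = (x + 3) div 4"
    have j: "j \<in> {1..i}" "4*j - 3 \<le> x" "x \<le> 4*j" using x unfolding j_def by auto
    have "cnt (S_ki k i) x = 2*(j-1) + cnt (block j (\<beta> j)) x"
      using cnt_Ski[OF j] k j by simp
    also have "\<dots> \<le> cnt S x" using \<beta> j by auto
    finally show ?thesis .
  qed
  have all: "\<forall>x. cnt (S_ki k i) x \<le> cnt S x"
  proof
    fix x show "cnt (S_ki k i) x \<le> cnt S x"
    proof (cases "x = 0")
      case True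
      have e: "{y\<in>S_ki k i. y \<le> x} = {}" using Ski_sub True by fastforce
      show ?thesis unfolding cnt_def e by simp
    next
      case False
      show ?thesis
      proof (cases "x \<le> 4*i")
        case True thus ?thesis using mid False by auto
      next
        case c2: False
        have "cnt (S_ki k i) x = cnt (S_ki k i) (4*i)" using cnt_Ski_big[of i x] cnt_Ski_big[of i "4*i"] c2 by simp
        also have "\<dots> \<le> cnt S (4*i)"
        proof (cases "i = 0")
          case True
          have e: "{y\<in>S_ki k i. y \<le> 4*i} = {}" using Ski_sub True by fastforce
          show ?thesis unfolding cnt_def e by simp
        next
          case False thus ?thesis using mid by auto
        qed
        also have "\<dots> \<le> cnt S x" using cnt_mono_x c2 by auto
        finally show ?thesis .
      qed
    qed
  qed
  obtain T where "T \<subseteq> S" "T = S_ki k i \<or> left_shift (4*i) (S_ki k i) T"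
    using suff_shift[of "S_ki k i" "4*i" S] Ski_sub S all unfolding players_def by auto
  thus ?thesis unfolding G_ibit_def using S k by blast
qed

lemma W_iff: "G_ibit i S \<longleftrightarrow> S \<subseteq> players (4*i) \<and> (\<forall>j\<in>{1..i}. Pb j (cnt S))"
proof
  assume "G_ibit i S"
  thus "S \<subseteq> players (4*i) \<and> (\<forall>j\<in>{1..i}. Pb j (cnt S))" using W_nec(1) W_nec_P by blast
next
  assume "S \<subseteq> players (4*i) \<and> (\<forall>j\<in>{1..i}. Pb j (cnt S))"
  thus "G_ibit i S" using W_suff by blast
qed




lemma block_cnt_vals:
  assumes "j \<ge> 1"
  shows "cnt (block j 0) (4*j-3) = 0" "b \<noteq> 0 \<Longrightarrow> cnt (block j b) (4*j-3) = 1"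
        "cnt (block j 0) (4*j-1) = 2" "b \<noteq> 0 \<Longrightarrow> cnt (block j b) (4*j-1) = 1"
proof -
  obtain j0 where j: "j = Suc j0" using assms by (cases j) auto
  have a: "{y \<in> block j 0. y \<le> 4*j-3} = {}" unfolding block_def j by auto
  show "cnt (block j 0) (4*j-3) = 0" unfolding cnt_def a by simp
  have c: "{y \<in> block j 0. y \<le> 4*j-1} = block j 0" unfolding block_def j by auto
  show "cnt (block j 0) (4*j-1) = 2" unfolding cnt_def c card_block by simp
  assume b: "b \<noteq> 0"
  have d: "{y \<in> block j b. y \<le> 4*j-3} = {4*j0+1}" unfolding block_def j using b by auto
  show "cnt (block j b) (4*j-3) = 1" unfolding cnt_def d by simp
  have e: "{y \<in> block j b. y \<le> 4*j-1} = {4*j0+1}" unfolding block_def j using b by auto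
  show "cnt (block j b) (4*j-1) = 1" unfolding cnt_def e by simp
qed

lemma block_first: "j \<ge> 1 \<Longrightarrow> 4*j-3 \<in> block j b \<longleftrightarrow> b \<noteq> 0"
proof -
  assume "j \<ge> 1"
  then obtain j0 where j: "j = Suc j0" by (cases j) auto
  show ?thesis unfolding block_def j by auto
qed

lemma blocks_incomp:
  assumes j: "j \<ge> 1" and b: "b \<in> {0,1}" "b' \<in> {0,1}"
    and le: "\<forall>x\<in>{4*j-3..4*j}. cnt (block j b') x \<le> cnt (block j b) x"
  shows "b = b'"
proof (rule ccontr)
  assume ne: "b \<noteq> b'"
  have r: "4*j-3 \<in> {4*j-3..4*j}" "4*j-1 \<in> {4*j-3..4*j}" using j by auto
  show False
  proof (cases "b = 0")
    case True
    hence "b' = 1" using ne b by auto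
    have "cnt (block j b') (4*j-3) \<le> cnt (block j b) (4*j-3)" using le r(1) by blast
    moreover have "cnt (block j b') (4*j-3) = 1" using block_cnt_vals(2)[OF j, of b'] \<open>b' = 1\<close> by simp
    moreover have "cnt (block j b) (4*j-3) = 0" using block_cnt_vals(1)[OF j] True by simp
    ultimately show False by simp
  next
    case False
    hence "b = 1" "b' = 0" using ne b by auto
    have "cnt (block j b') (4*j-1) \<le> cnt (block j b) (4*j-1)" using le r(2) by blast
    moreover have "cnt (block j b) (4*j-1) = 1" using block_cnt_vals(4)[OF j, of b] \<open>b = 1\<close> by simp
    moreover have "cnt (block j b') (4*j-1) = 2" using block_cnt_vals(3)[OF j] \<open>b' = 0\<close> by simp
    ultimately show False by simp
  qed
qed

lemma rs_lose:
  assumes "right_shift (4*i) (S_ki k i) T"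
  shows "\<not> G_ibit i T"
proof
  assume W: "G_ibit i T"
  let ?S = "S_ki k i"
  obtain T1 where t1: "direct_right_shift (4*i) ?S T1" "(direct_right_shift (4*i))\<^sup>*\<^sup>* T1 T"
    using assms unfolding right_shift_def by (meson tranclpD)
  obtain m where m: "m \<in> ?S" "m + 1 \<notin> ?S" "T1 = insert (m + 1) (?S - {m})"
    using t1(1) unfolding direct_right_shift_def by blast
  have cT: "cnt T x \<le> cnt ?S x" for x
    using right_shift_cnt[OF t1(2), of x] drs_cnt[OF t1(1), of x] by linarith
  have cTm: "cnt T m + 1 \<le> cnt ?S m"
  proof -
    have "cnt T1 m = cnt ?S m - 1" using cnt_drs(1)[OF m(1) m(2), of m] m(3) by simp
    moreover have "cnt ?S m \<ge> 1" using cnt_drs(2)[OF m(1) m(2)] .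
    moreover have "cnt T m \<le> cnt T1 m" using right_shift_cnt[OF t1(2), of m] .
    ultimately show ?thesis by linarith
  qed
  obtain j where j: "j \<in> {1..i}" "m \<in> block j (bit_of i k j)" using m(1) mem_Ski by blast
  have mb: "4*j-3 \<le> m" "m \<le> 4*j" using block_bounds[of j m] j by auto
  have "Pb j (cnt T)" using W_nec_P[OF W j(1)] .
  then obtain b' where b': "b' \<in> {0,1}" "\<forall>x\<in>{4*j-3..4*j}. 2*(j-1) + cnt (block j b') x \<le> cnt T x"
    unfolding Pb_def by blast
  have le: "\<forall>x\<in>{4*j-3..4*j}. cnt (block j b') x \<le> cnt (block j (bit_of i k j)) x"
  proof
    fix x assume x: "x \<in> {4*j-3..4*j}"
    have "2*(j-1) + cnt (block j b') x \<le> cnt T x" using b' x by blast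
    also have "\<dots> \<le> cnt ?S x" by (rule cT)
    also have "\<dots> = 2*(j-1) + cnt (block j (bit_of i k j)) x" using cnt_Ski[OF j(1)] x by auto
    finally show "cnt (block j b') x \<le> cnt (block j (bit_of i k j)) x" by simp
  qed
  have "bit_of i k j = b'" using blocks_incomp[OF _ bit_of_01 b'(1) le] j by auto
  hence eqb: "cnt (block j b') m = cnt (block j (bit_of i k j)) m" by simp
  have "2*(j-1) + cnt (block j b') m \<le> cnt T m" using b' mb by auto
  moreover have "cnt ?S m = 2*(j-1) + cnt (block j (bit_of i k j)) m" using cnt_Ski[OF j(1)] mb by auto
  ultimately show False using cTm eqb by linarith
qed

lemma Ski_win: "k < 2^i \<Longrightarrow> G_ibit i (S_ki k i)"
  unfolding G_ibit_def players_def using Ski_sub by blast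

lemma roof_iff: "roof_coalition (4*i) (G_ibit i) R \<longleftrightarrow> (\<exists>k<2^i. R = S_ki k i)"
proof
  assume r: "roof_coalition (4*i) (G_ibit i) R"
  hence W: "G_ibit i R" and min: "\<forall>T. T \<subset> R \<longrightarrow> \<not> G_ibit i T"
    and rs: "\<forall>T. right_shift (4*i) R T \<longrightarrow> \<not> G_ibit i T" and sub: "R \<subseteq> players (4*i)"
    unfolding roof_coalition_def by auto
  obtain k T where k: "k < 2^i" "T = S_ki k i \<or> left_shift (4*i) (S_ki k i) T" "T \<subseteq> R"
    using W unfolding G_ibit_def by blast
  have "G_ibit i T" unfolding G_ibit_def using k sub by blast
  hence "T = R" using min k(3) by blast
  show "\<exists>k<2^i. R = S_ki k i"
  proof (cases "T = S_ki k i")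
    case True thus ?thesis using \<open>T = R\<close> k by blast
  next
    case False
    hence "left_shift (4*i) (S_ki k i) R" using k(2) \<open>T = R\<close> by blast
    hence "right_shift (4*i) R (S_ki k i)" by (rule left_right)
    thus ?thesis using rs Ski_win[OF k(1)] by blast
  qed
next
  assume "\<exists>k<2^i. R = S_ki k i"
  then obtain k where k: "k < 2^i" "R = S_ki k i" by blast
  have a: "R \<subseteq> players (4*i)" using k Ski_sub unfolding players_def by blast
  have b: "G_ibit i R" using k Ski_win by blast
  have c: "\<not> G_ibit i T" if "T \<subset> R" for T
  proof
    assume "G_ibit i T"
    then obtain k' where "\<forall>x. cnt (S_ki k' i) x \<le> cnt T x" using W_nec(2) by blast
    hence "cnt (S_ki k' i) (4*i) \<le> cnt T (4*i)" by blast
    moreover have "cnt (S_ki k' i) (4*i) = 2*i" by (rule cnt_Ski_full) simp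
    ultimately have "2*i \<le> cnt T (4*i)" by simp
    also have "\<dots> \<le> card T" unfolding cnt_def
      by (rule card_mono) (use finite_subset[of T "S_ki k i"] that k in auto)
    also have "\<dots> < card R" using that k by (simp add: psubset_card_mono)
    finally show False using k card_Ski by simp
  qed
  have d: "\<not> G_ibit i T" if "right_shift (4*i) R T" for T
    using rs_lose that k by blast
  show "roof_coalition (4*i) (G_ibit i) R" unfolding roof_coalition_def using a b c d by blast
qed

lemma Ski_inj: "inj_on (\<lambda>k. S_ki k i) {..<2^i}"
proof (rule inj_onI)
  fix k k' assume h: "k \<in> {..<2^i}" "k' \<in> {..<2^i}" "S_ki k i = S_ki k' i"
  have key: "4*j-3 \<in> S_ki k i \<longleftrightarrow> bit_of i k j \<noteq> 0" if j: "j \<in> {1..i}" for j k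
  proof
    assume "4*j-3 \<in> S_ki k i"
    then obtain j' where j': "j' \<in> {1..i}" "4*j-3 \<in> block j' (bit_of i k j')" using mem_Ski by blast
    have "4*j'-3 \<le> 4*j-3" "4*j-3 \<le> 4*j'" using block_bounds[OF _ j'(2)] j' by auto
    hence "j' = j" using j j' by auto
    thus "bit_of i k j \<noteq> 0" using j'(2) j block_first by auto
  next
    assume "bit_of i k j \<noteq> 0"
    hence "4*j-3 \<in> block j (bit_of i k j)" using j block_first by auto
    thus "4*j-3 \<in> S_ki k i" using mem_Ski j by blast
  qed
  have "\<forall>j\<in>{1..i}. bit_of i k j = bit_of i k' j"
  proof
    fix j assume j: "j \<in> {1..i}"
    have "bit_of i k j \<noteq> 0 \<longleftrightarrow> bit_of i k' j \<noteq> 0" using key[OF j, of k] key[OF j, of k'] h(3) by simp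
    thus "bit_of i k j = bit_of i k' j" using bit_of_01[of i k j] bit_of_01[of i k' j] by auto
  qed
  thus "k = k'" using bits_inj h by auto
qed

lemma card_roofs: "card {S. roof_coalition (4*i) (G_ibit i) S} = 2^i"
proof -
  have "{S. roof_coalition (4*i) (G_ibit i) S} = (\<lambda>k. S_ki k i) ` {..<2^i}"
    using roof_iff by auto
  thus ?thesis using card_image[OF Ski_inj] by simp
qed




lemma down_closed_aux:
  fixes x y N :: nat
  assumes dc: "\<forall>m\<in>S. 2 \<le> m \<longrightarrow> m \<le> N \<longrightarrow> m - 1 \<in> S"
  shows "x \<in> S \<Longrightarrow> x \<le> N \<Longrightarrow> 1 \<le> y \<Longrightarrow> y \<le> x \<Longrightarrow> y \<in> S"
proof (induction x)
  case 0 thus ?case by simp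
next
  case (Suc x)
  show ?case
  proof (cases "y = Suc x")
    case True thus ?thesis using Suc by simp
  next
    case False
    hence yx: "y \<le> x" using Suc by simp
    hence "x \<ge> 1" using Suc by simp
    hence "x \<in> S" using dc Suc.prems by (metis diff_Suc_1 Suc_le_mono one_add_one plus_1_eq_Suc)
    thus ?thesis using Suc yx by simp
  qed
qed

lemma down_closed:
  fixes N :: nat and S :: "nat set"
  assumes dc: "\<forall>m\<in>S. 2 \<le> m \<longrightarrow> m \<le> N \<longrightarrow> m - 1 \<in> S"
  shows "\<exists>a\<le>N. S \<inter> {1..N} = {1..a}"
proof (cases "S \<inter> {1..N} = {}")
  case True hence "S \<inter> {1..N} = {1..0}" by simp
  thus ?thesis by blast
next
  case False
  define a where "a = Max (S \<inter> {1..N})"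
  have f: "finite (S \<inter> {1..N})" by simp
  have aS: "a \<in> S \<inter> {1..N}" unfolding a_def using Max_in[OF f False] .
  have "S \<inter> {1..N} = {1..a}"
  proof
    show "S \<inter> {1..N} \<subseteq> {1..a}" unfolding a_def using Max_ge[OF f] by auto
    show "{1..a} \<subseteq> S \<inter> {1..N}" using down_closed_aux[OF dc, of a] aS by auto
  qed
  thus ?thesis using aS by auto
qed

lemma ceil_form:
  assumes c: "ceiling_coalition (4*i) (G_ibit i) S"
  shows "\<exists>j\<in>{1..i}. \<exists>a\<le>4*i. \<exists>B\<in>Pow {4*j-2..4*j}. S = {1..a} \<union> B \<union> {4*j+1..4*i}"
proof -
  have Sp: "S \<subseteq> {1..4*i}" and L: "\<not> G_ibit i S"
    and up: "\<forall>m \<in> players (4*i) - S. G_ibit i (insert m S)"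
    and ls: "\<forall>T. left_shift (4*i) S T \<longrightarrow> G_ibit i T"
    using c unfolding ceiling_coalition_def players_def by auto
  obtain j where j: "j \<in> {1..i}" "\<not> Pb j (cnt S)"
    using L W_suff[of S i] Sp unfolding players_def by blast
  have tail: "{4*j+1..4*i} \<subseteq> S"
  proof
    fix m assume m: "m \<in> {4*j+1..4*i}"
    show "m \<in> S"
    proof (rule ccontr)
      assume "m \<notin> S"
      hence "G_ibit i (insert m S)" using up m j unfolding players_def by auto
      hence "Pb j (cnt (insert m S))" using W_nec_P j by blast
      moreover have "Pb j (cnt (insert m S)) = Pb j (cnt S)"
        by (rule Pb_cong) (use m cnt_insert_below in auto)
      ultimately show False using j by simp
    qed
  qed
  have dc: "\<forall>m\<in>S. 2 \<le> m \<longrightarrow> m \<le> 4*j-3 \<longrightarrow> m - 1 \<in> S"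
  proof (intro ballI impI)
    fix m assume m: "m \<in> S" "2 \<le> m" "m \<le> 4*j-3"
    show "m - 1 \<in> S"
    proof (rule ccontr)
      assume nm: "m - 1 \<notin> S"
      define S' where "S' = insert (m - 1) (S - {m})"
      have "direct_left_shift (4*i) S S'"
        unfolding direct_left_shift_def S'_def apply (rule bexI[of _ m]) using m nm Sp by auto
      hence "left_shift (4*i) S S'" unfolding left_shift_def by blast
      hence "G_ibit i S'" using ls by blast
      hence "Pb j (cnt S')" using W_nec_P j by blast
      moreover have "Pb j (cnt S') = Pb j (cnt S)"
      proof (rule Pb_cong)
        fix x assume "4*j-3 \<le> x" "x \<le> 4*j"
        hence "x \<noteq> m - 1" using m by auto
        thus "cnt S' x = cnt S x" unfolding S'_def using cnt_dls[OF m(1) nm] m by auto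
      qed
      ultimately show False using j by simp
    qed
  qed
  obtain a where a: "a \<le> 4*j-3" "S \<inter> {1..4*j-3} = {1..a}" using down_closed[OF dc] by blast
  have "S = {1..a} \<union> (S \<inter> {4*j-2..4*j}) \<union> {4*j+1..4*i}"
  proof
    show "S \<subseteq> {1..a} \<union> (S \<inter> {4*j-2..4*j}) \<union> {4*j+1..4*i}"
    proof
      fix y assume y: "y \<in> S"
      hence y1: "1 \<le> y" "y \<le> 4*i" using Sp by auto
      consider "y \<le> 4*j-3" | "4*j-2 \<le> y \<and> y \<le> 4*j" | "4*j+1 \<le> y" by linarith
      thus "y \<in> {1..a} \<union> (S \<inter> {4*j-2..4*j}) \<union> {4*j+1..4*i}"
      proof cases
        case 1
        hence "y \<in> S \<inter> {1..4*j-3}" using y y1 by auto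
        hence "y \<in> {1..a}" by (simp only: a(2))
        thus ?thesis by simp
      next
        case 2 thus ?thesis using y by auto
      next
        case 3 thus ?thesis using y1 by auto
      qed
    qed
    have s1: "{1..a} \<subseteq> S"
    proof -
      have "{1..a} = S \<inter> {1..4*j-3}" using a(2) by simp
      also have "\<dots> \<subseteq> S" by (rule Int_lower1)
      finally show ?thesis .
    qed
    show "{1..a} \<union> (S \<inter> {4*j-2..4*j}) \<union> {4*j+1..4*i} \<subseteq> S" using s1 tail by auto
  qed
  moreover have "a \<le> 4*i" using a(1) j by auto
  moreover have "S \<inter> {4*j-2..4*j} \<in> Pow {4*j-2..4*j}" by simp
  ultimately show ?thesis
    by (intro bexI[OF _ j(1)] exI[of _ a] conjI bexI[of _ "S \<inter> {4*j-2..4*j}"])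
qed

lemma card_ceil: "card {S. ceiling_coalition (4*i) (G_ibit i) S} \<le> 8 * i * (4*i + 1)"
proof -
  define F where "F = (\<lambda>(j::nat, a::nat, B::nat set). {1..a} \<union> B \<union> {4*j+1..4*i})"
  define D where "D = (SIGMA j:{1..i}. {0..4*i} \<times> Pow {4*j-2..4*j})"
  have sub: "{S. ceiling_coalition (4*i) (G_ibit i) S} \<subseteq> F ` D"
  proof
    fix S assume "S \<in> {S. ceiling_coalition (4*i) (G_ibit i) S}"
    then obtain j a B where "j \<in> {1..i}" "a \<le> 4*i" "B \<in> Pow {4*j-2..4*j}"
      "S = {1..a} \<union> B \<union> {4*j+1..4*i}" using ceil_form by blast
    thus "S \<in> F ` D" unfolding F_def D_def
      by (intro image_eqI[of _ _ "(j, a, B)"]) auto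
  qed
  have fD: "finite D" unfolding D_def by auto
  have cD: "card D = (\<Sum>j\<in>{1..i}. (4*i+1) * 8)"
  proof -
    have "card D = (\<Sum>j\<in>{1..i}. card ({0..4*i} \<times> Pow {4*j-2..4*j}))"
      unfolding D_def by (rule card_SigmaI) auto
    also have "\<dots> = (\<Sum>j\<in>{1..i}. (4*i+1) * 8)"
    proof (rule sum.cong)
      fix j assume "j \<in> {1..i}"
      hence "card {4*j-2..4*j} = 3" by auto
      hence "card (Pow {4*j-2..4*j}) = 8" by (simp add: card_Pow)
      thus "card ({0..4*i} \<times> Pow {4*j-2..4*j}) = (4*i+1) * 8"
        by (simp add: card_cartesian_product)
    qed simp
    finally show ?thesis .
  qed
  have "card {S. ceiling_coalition (4*i) (G_ibit i) S} \<le> card (F ` D)"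
    by (rule card_mono) (use fD sub in auto)
  also have "\<dots> \<le> card D" by (rule card_image_le[OF fD])
  also have "\<dots> = 8 * i * (4*i + 1)" unfolding cD by (simp add: ring_distribs mult_ac)
  finally show ?thesis .
qed

theorem corollary3:
  "\<exists>c::real. c > 0 \<and>
     (\<forall>i::nat. i \<ge> 1 \<longrightarrow>
        real (card {S. ceiling_coalition (4 * i) (G_ibit i) S}) \<le> c * real (4 * i) ^ 5
        \<and> card {S. roof_coalition (4 * i) (G_ibit i) S} = 2 ^ i)"
proof (intro exI[of _ 1] conjI allI impI)
  show "(0::real) < 1" by simp
  fix i :: nat assume i: "i \<ge> 1"
  show "card {S. roof_coalition (4 * i) (G_ibit i) S} = 2 ^ i" by (rule card_roofs)
  have e8: "8 * i * (4*i + 1) = 32*(i*i) + 8*i" by (simp add: ring_distribs mult_ac)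
  have "8 * i \<le> 8 * (i * i)" using i by simp
  hence "8 * i * (4*i + 1) \<le> 40 * i^2" unfolding e8 power2_eq_square by linarith
  also have "\<dots> \<le> 40 * i^5" using i by (simp add: power_increasing)
  also have "\<dots> \<le> (4*i)^5" by (simp add: power_mult_distrib)
  finally have "card {S. ceiling_coalition (4*i) (G_ibit i) S} \<le> (4*i)^5"
    using card_ceil[of i] by linarith
  hence "real (card {S. ceiling_coalition (4*i) (G_ibit i) S}) \<le> real ((4*i)^5)"
    by (simp only: of_nat_le_iff)
  thus "real (card {S. ceiling_coalition (4 * i) (G_ibit i) S}) \<le> 1 * real (4 * i) ^ 5"
    by simp
qed


end
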